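(* Let $G(a,b,\lambda)$ and $H(a,b,\lambda)$ be polynomials in $a,b$ whose coefficients are Laurent polynomials in $\lambda$, and let $g=G(\varphi,\varphi',\lambda)$, $h=H(\varphi,\varphi',\lambda)$ (with $\varphi=\varphi(\lambda)$, $\varphi'=d\varphi/d\lambda$) be formal series in $\lambda$ of lowest order $\ge1$, i.e. containing only positive powers of $\lambda$. Then $$[\partial_g,\partial_h]=\partial_{\{g,h\}},\qquad \{g,h\}=h_\varphi\,g-g_\varphi\,h+h_{\varphi'}\,D_\lambda g-g_{\varphi'}\,D_\lambda h,$$ where $g_\varphi=(\partial G/\partial a)(\varphi,\varphi',\lambda)$, $g_{\varphi'}=(\partial G/\partial b)(\varphi,\varphi',\lambda)$ (similarly for $h$), and $D_\lambda$ denotes the derivative $d/d\lambda$ of a formal series in $\lambda$.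
   Context: $\varphi^{(1)},\varphi^{(2)},\dots$ are independent variables and $\varphi(\lambda)=1/\lambda+\sum_{k\ge1}\varphi^{(k)}\lambda^k$, a formal Laurent series with coefficients in $R=\mathbb R[\varphi^{(1)},\varphi^{(2)},\dots]$. For a series $f=\sum_{i\ge1}f^{(i)}\lambda^i$ with $f^{(i)}\in R$, $\partial_f$ denotes the derivation $\sum_{i\ge1}f^{(i)}\partial/\partial\varphi^{(i)}$ of $R$, acting on series coefficientwise. *)

theory Defs
  imports "HOL-Library.Poly_Mapping" "HOL-Computational_Algebra.Formal_Laurent_Series"
begin

text \<open>The ring R = real[phi1, phi2, ...]: polynomials in countably many variables,
  represented as finitely supported maps from monomials (exponent vectors) to coefficients.
  Poly-mapping variable number k-1 stands for phi^(k) (k >= 1).\<close>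
type_synonym R = "(nat \<Rightarrow>\<^sub>0 nat) \<Rightarrow>\<^sub>0 real"

definition Rconst :: "real \<Rightarrow> R" where
  "Rconst r = Poly_Mapping.single 0 r"

definition Rvar :: "nat \<Rightarrow> R" where
  "Rvar k = Poly_Mapping.single (Poly_Mapping.single (k - 1) 1) 1"

definition pdiff :: "nat \<Rightarrow> R \<Rightarrow> R" where
  "pdiff k p = (\<Sum>m\<in>Poly_Mapping.keys p. Poly_Mapping.single (m - Poly_Mapping.single (k - 1) 1)
                     (of_nat (Poly_Mapping.lookup (m :: nat \<Rightarrow>\<^sub>0 nat) (k - 1)) * Poly_Mapping.lookup p m))"

text \<open>Indices (0-based) of the variables occurring in p.\<close>
definition Rvars :: "R \<Rightarrow> nat set" where
  "Rvars p = \<Union> (Poly_Mapping.keys ` Poly_Mapping.keys p)"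

text \<open>The derivation partial_f = sum_{i>=1} f^(i) d/dphi^(i); on a given p only the finitely
  many variables occurring in p contribute.\<close>
definition der :: "R fls \<Rightarrow> R \<Rightarrow> R" where
  "der f p = (\<Sum>i\<in>Suc ` Rvars p. fls_nth f (int i) * pdiff i p)"

definition phi :: "R fls" where
  "phi = Abs_fls (\<lambda>n. if n = -1 then 1 else if n \<ge> 1 then Rvar (nat n) else 0)"

definition phi' :: "R fls" where
  "phi' = fls_deriv phi"

text \<open>A polynomial G(a,b,lambda) = sum_{i,j<=N} sum_{-M<=k<=M} c i j k lambda^k a^i b^j
  (polynomial in a,b with real Laurent-polynomial coefficients), evaluated at series a, b,
  together with its formal partial derivatives in a and b.\<close>
definition evalP :: "nat \<Rightarrow> nat \<Rightarrow> (nat \<Rightarrow> nat \<Rightarrow> int \<Rightarrow> real) \<Rightarrow> R fls \<Rightarrow> R fls \<Rightarrow> R fls" where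
  "evalP N M c a b = (\<Sum>i\<le>N. \<Sum>j\<le>N. \<Sum>k\<in>{- int M..int M}.
       fls_const (Rconst (c i j k)) * fls_X_intpow k * a ^ i * b ^ j)"

definition evalP_a :: "nat \<Rightarrow> nat \<Rightarrow> (nat \<Rightarrow> nat \<Rightarrow> int \<Rightarrow> real) \<Rightarrow> R fls \<Rightarrow> R fls \<Rightarrow> R fls" where
  "evalP_a N M c a b = (\<Sum>i\<le>N. \<Sum>j\<le>N. \<Sum>k\<in>{- int M..int M}.
       of_nat i * fls_const (Rconst (c i j k)) * fls_X_intpow k * a ^ (i - 1) * b ^ j)"

definition evalP_b :: "nat \<Rightarrow> nat \<Rightarrow> (nat \<Rightarrow> nat \<Rightarrow> int \<Rightarrow> real) \<Rightarrow> R fls \<Rightarrow> R fls \<Rightarrow> R fls" where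
  "evalP_b N M c a b = (\<Sum>i\<le>N. \<Sum>j\<le>N. \<Sum>k\<in>{- int M..int M}.
       of_nat j * fls_const (Rconst (c i j k)) * fls_X_intpow k * a ^ i * b ^ (j - 1))"

end

theory Submission
  imports Defs
begin

notation fls_nth (infixl "$$" 75)


abbreviation ee :: "nat \<Rightarrow> nat \<Rightarrow>\<^sub>0 nat" where "ee k \<equiv> Poly_Mapping.single (k - 1) 1"

lemma pdiff_superset:
  assumes "finite A" "Poly_Mapping.keys p \<subseteq> A"
  shows "pdiff k p = (\<Sum>m\<in>A. Poly_Mapping.single (m - ee k)
                     (of_nat (Poly_Mapping.lookup m (k - 1)) * Poly_Mapping.lookup p m))"
  unfolding pdiff_def
  by (rule sum.mono_neutral_left) (use assms in \<open>auto simp: in_keys_iff\<close>)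

lemma pdiff_single:
  "pdiff k (Poly_Mapping.single m c) = Poly_Mapping.single (m - ee k) (of_nat (Poly_Mapping.lookup m (k - 1)) * c)"
  by (subst pdiff_superset[of "{m}"]) auto

lemma pdiff_zero[simp]: "pdiff k 0 = 0"
  by (simp add: pdiff_def)

lemma pdiff_add: "pdiff k (p + q) = pdiff k p + pdiff k q"
proof -
  let ?A = "Poly_Mapping.keys p \<union> Poly_Mapping.keys q"
  have "pdiff k (p + q) = (\<Sum>m\<in>?A. Poly_Mapping.single (m - ee k)
                     (of_nat (Poly_Mapping.lookup m (k - 1)) * Poly_Mapping.lookup (p+q) m))"
    by (rule pdiff_superset) (auto dest: keys_add[THEN subsetD])
  also have "\<dots> = pdiff k p + pdiff k q"
    using pdiff_superset[of ?A p k] pdiff_superset[of ?A q k]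
    by (auto simp: lookup_add distrib_left single_add sum.distrib)
  finally show ?thesis .
qed

lemma pdiff_diff: "pdiff k (p - q) = pdiff k p - pdiff k q"
  using pdiff_add[of k "p - q" q] by (simp add: algebra_simps)

lemma pdiff_sum: "pdiff k (sum f A) = (\<Sum>x\<in>A. pdiff k (f x))"
  by (induction A rule: infinite_finite_induct) (auto simp: pdiff_add)

lemma R_decomp: "(p::R) = (\<Sum>m\<in>Poly_Mapping.keys p. Poly_Mapping.single m (Poly_Mapping.lookup p m))"
proof (rule poly_mapping_eqI)
  fix k
  show "Poly_Mapping.lookup p k = Poly_Mapping.lookup (\<Sum>m\<in>Poly_Mapping.keys p. Poly_Mapping.single m (Poly_Mapping.lookup p m)) k"
    by (cases "k \<in> Poly_Mapping.keys p")
       (auto simp: lookup_sum lookup_single when_def in_keys_iff sum.delta cong: sum.cong)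
qed

lemma pdiff_mult_single:
  "pdiff k (Poly_Mapping.single m a * Poly_Mapping.single n b)
   = pdiff k (Poly_Mapping.single m a) * Poly_Mapping.single n b
     + Poly_Mapping.single m a * pdiff k (Poly_Mapping.single n b)"
proof -
  define mk where "mk = Poly_Mapping.lookup m (k-1)"
  define nk where "nk = Poly_Mapping.lookup n (k-1)"
  have e1: "m - ee k + n = m + n - ee k" if "mk \<noteq> 0"
    using that unfolding mk_def by (intro poly_mapping_eqI) (auto simp: lookup_add lookup_minus lookup_single when_def)
  have e2: "m + (n - ee k) = m + n - ee k" if "nk \<noteq> 0"
    using that unfolding nk_def by (intro poly_mapping_eqI) (auto simp: lookup_add lookup_minus lookup_single when_def)
  have L: "pdiff k (Poly_Mapping.single m a * Poly_Mapping.single n b) =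
     Poly_Mapping.single (m + n - ee k) (of_nat (mk + nk) * (a * b))"
    by (simp add: mult_single pdiff_single lookup_add mk_def nk_def)
  have R1: "pdiff k (Poly_Mapping.single m a) * Poly_Mapping.single n b =
     Poly_Mapping.single (m + n - ee k) (of_nat mk * (a * b))"
  proof (cases "mk = 0")
    case True then show ?thesis by (simp add: pdiff_single mk_def)
  next
    case False then show ?thesis
      by (simp only: pdiff_single mult_single mk_def[symmetric] e1[OF False]) (simp add: mult.assoc)
  qed
  have R2: "Poly_Mapping.single m a * pdiff k (Poly_Mapping.single n b) =
     Poly_Mapping.single (m + n - ee k) (of_nat nk * (a * b))"
  proof (cases "nk = 0")
    case True then show ?thesis by (simp add: pdiff_single nk_def)
  next
    case False then show ?thesis
      by (simp only: pdiff_single mult_single nk_def[symmetric] e2[OF False]) (simp add: algebra_simps)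
  qed
  show ?thesis unfolding L R1 R2 by (simp add: single_add[symmetric] algebra_simps)
qed

lemma pdiff_mult: "pdiff k (p * q) = pdiff k p * q + p * pdiff k (q::R)"
proof -
  let ?P = "\<lambda>m. Poly_Mapping.single m (Poly_Mapping.lookup p m)"
  let ?Q = "\<lambda>m. Poly_Mapping.single m (Poly_Mapping.lookup q m)"
  have p: "p = sum ?P (Poly_Mapping.keys p)" and q: "q = sum ?Q (Poly_Mapping.keys q)"
    by (rule R_decomp)+
  have "p * q = (\<Sum>m\<in>Poly_Mapping.keys p. \<Sum>n\<in>Poly_Mapping.keys q. ?P m * ?Q n)"
  proof -
    have "p * q = sum ?P (Poly_Mapping.keys p) * sum ?Q (Poly_Mapping.keys q)"
      using p q by simp
    thus ?thesis by (simp add: sum_product)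
  qed
  hence "pdiff k (p * q) = (\<Sum>m\<in>Poly_Mapping.keys p. \<Sum>n\<in>Poly_Mapping.keys q. pdiff k (?P m * ?Q n))"
    by (simp add: pdiff_sum)
  also have "\<dots> = (\<Sum>m\<in>Poly_Mapping.keys p. \<Sum>n\<in>Poly_Mapping.keys q. pdiff k (?P m) * ?Q n)
                + (\<Sum>m\<in>Poly_Mapping.keys p. \<Sum>n\<in>Poly_Mapping.keys q. ?P m * pdiff k (?Q n))"
    by (simp add: pdiff_mult_single sum.distrib)
  also have "\<dots> = pdiff k p * q + p * pdiff k q"
  proof -
    have A: "pdiff k (sum ?P (Poly_Mapping.keys p)) * sum ?Q (Poly_Mapping.keys q)
       = (\<Sum>m\<in>Poly_Mapping.keys p. \<Sum>n\<in>Poly_Mapping.keys q. pdiff k (?P m) * ?Q n)"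
      by (simp add: pdiff_sum sum_product)
    have B: "sum ?P (Poly_Mapping.keys p) * pdiff k (sum ?Q (Poly_Mapping.keys q))
       = (\<Sum>m\<in>Poly_Mapping.keys p. \<Sum>n\<in>Poly_Mapping.keys q. ?P m * pdiff k (?Q n))"
      by (simp add: pdiff_sum sum_product)
    show ?thesis using A[folded p q] B[folded p q] by simp
  qed
  finally show ?thesis .
qed

lemma pdiff_comm: "pdiff i (pdiff j p) = pdiff j (pdiff i p)"
proof -
  have e: "m - ee j - ee i = m - ee i - ee j" for m
    by (intro poly_mapping_eqI) (auto simp: lookup_minus)
  have c: "(of_nat (Poly_Mapping.lookup (m - ee j) (i - 1)) :: real) * of_nat (Poly_Mapping.lookup m (j - 1))
         = of_nat (Poly_Mapping.lookup (m - ee i) (j - 1)) * of_nat (Poly_Mapping.lookup m (i - 1))" for m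
    by (cases "i - 1 = j - 1") (auto simp: lookup_minus lookup_single when_def)
  show ?thesis
    unfolding pdiff_def[of j p] pdiff_def[of i p]
    apply (simp only: pdiff_sum pdiff_single)
    apply (rule sum.cong[OF refl])
    apply (simp only: e mult.assoc[symmetric] c)
    done
qed



lemma finite_Rvars[simp]: "finite (Rvars p)"
  by (simp add: Rvars_def)

lemma Rvars_add: "Rvars (p + q) \<subseteq> Rvars p \<union> Rvars q"
  unfolding Rvars_def using keys_add[of p q] by blast

lemma Rvars_mult: "Rvars (p * q) \<subseteq> Rvars p \<union> Rvars (q::R)"
proof
  fix x assume "x \<in> Rvars (p * q)"
  then obtain m where m: "m \<in> Poly_Mapping.keys (p * q)" "x \<in> Poly_Mapping.keys m"
    by (auto simp: Rvars_def)
  then obtain a b where "m = a + b" "a \<in> Poly_Mapping.keys p" "b \<in> Poly_Mapping.keys q"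
    using keys_mult[of p q] by blast
  with m(2) show "x \<in> Rvars p \<union> Rvars q"
    using keys_add[of a b] by (auto simp: Rvars_def)
qed

lemma Rvars_pdiff: "Rvars (pdiff k p) \<subseteq> Rvars p"
proof
  fix x assume "x \<in> Rvars (pdiff k p)"
  then obtain m where m: "m \<in> Poly_Mapping.keys (pdiff k p)" "x \<in> Poly_Mapping.keys m"
    by (auto simp: Rvars_def)
  from m(1) obtain m0 where m0: "m0 \<in> Poly_Mapping.keys p" "m = m0 - ee k"
    unfolding pdiff_def using keys_sum by (fastforce split: if_splits)
  have "x \<in> Poly_Mapping.keys m0"
    using m(2) m0(2) by (auto simp: in_keys_iff lookup_minus)
  with m0(1) show "x \<in> Rvars p" by (auto simp: Rvars_def)
qed

lemma pdiff_notin: "k - 1 \<notin> Rvars p \<Longrightarrow> pdiff k p = 0"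
  unfolding pdiff_def Rvars_def
  by (intro sum.neutral) (auto simp: in_keys_iff)

lemma Rvars_empty_const: "Poly_Mapping.keys p \<subseteq> {0} \<Longrightarrow> Rvars p = {}"
  by (auto simp: Rvars_def)

lemma Rvars_of_int[simp]: "Rvars (of_int k) = {}"
  by (rule Rvars_empty_const) (metis keys_single single_of_int empty_subsetI order_refl)

lemma Rvars_Rconst[simp]: "Rvars (Rconst c) = {}"
  by (rule Rvars_empty_const) (simp add: Rconst_def)

lemma Rvars_one[simp]: "Rvars 1 = {}"
  by (rule Rvars_empty_const) simp

lemma Rvars_zero[simp]: "Rvars 0 = {}"
  by (simp add: Rvars_def)

lemma der_superset:
  assumes "finite S" "0 \<notin> S" "Suc ` Rvars p \<subseteq> S"
  shows "der f p = (\<Sum>i\<in>S. fls_nth f (int i) * pdiff i p)"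
  unfolding der_def
proof (rule sum.mono_neutral_left)
  show "\<forall>i\<in>S - Suc ` Rvars p. fls_nth f (int i) * pdiff i p = 0"
  proof
    fix i assume i: "i \<in> S - Suc ` Rvars p"
    with assms(2) have "i = Suc (i - 1)" by (cases i) auto
    with i have "i - 1 \<notin> Rvars p" by (metis DiffD2 imageI)
    thus "fls_nth f (int i) * pdiff i p = 0" by (simp add: pdiff_notin)
  qed
qed (use assms in auto)

lemma der_empty: "Rvars p = {} \<Longrightarrow> der f p = 0"
  by (simp add: der_def)

lemma der_zero[simp]: "der f 0 = 0"
  by (simp add: der_empty)

lemma der_add: "der f (p + q) = der f p + der f q"
proof -
  let ?S = "Suc ` (Rvars p \<union> Rvars q)"
  have "der f (p + q) = (\<Sum>i\<in>?S. fls_nth f (int i) * pdiff i (p + q))"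
    using Rvars_add[of p q] by (intro der_superset) auto
  also have "\<dots> = (\<Sum>i\<in>?S. fls_nth f (int i) * pdiff i p) + (\<Sum>i\<in>?S. fls_nth f (int i) * pdiff i q)"
    by (simp add: pdiff_add distrib_left sum.distrib)
  also have "\<dots> = der f p + der f q"
    by (subst (1 2) der_superset[symmetric]) auto
  finally show ?thesis .
qed

lemma der_diff: "der f (p - q) = der f p - der f q"
  using der_add[of f "p - q" q] by (simp add: algebra_simps)

lemma der_sum: "der f (sum F A) = (\<Sum>x\<in>A. der f (F x))"
  by (induction A rule: infinite_finite_induct) (auto simp: der_add)

lemma der_mult: "der f (p * q) = der f p * q + p * der f q"
proof -
  let ?S = "Suc ` (Rvars p \<union> Rvars q)"
  have "der f (p * q) = (\<Sum>i\<in>?S. fls_nth f (int i) * pdiff i (p * q))"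
    using Rvars_mult[of p q] by (intro der_superset) auto
  also have "\<dots> = (\<Sum>i\<in>?S. fls_nth f (int i) * pdiff i p) * q + p * (\<Sum>i\<in>?S. fls_nth f (int i) * pdiff i q)"
    by (simp add: pdiff_mult algebra_simps sum.distrib sum_distrib_left sum_distrib_right)
  also have "\<dots> = der f p * q + p * der f q"
    by (subst (1 2) der_superset[symmetric]) auto
  finally show ?thesis .
qed

lemma der_of_int_mult: "der f (of_int k * p) = of_int k * der f p"
  by (simp add: der_mult der_empty)

lemma der_Rvar: "n \<ge> 1 \<Longrightarrow> der f (Rvar n) = fls_nth f (int n)"
proof -
  assume n: "n \<ge> 1"
  have "der f (Rvar n) = (\<Sum>i\<in>{n}. fls_nth f (int i) * pdiff i (Rvar n))"
    using n by (intro der_superset) (auto simp: Rvars_def Rvar_def)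
  also have "\<dots> = fls_nth f (int n)"
    by (simp add: Rvar_def pdiff_single)
  finally show ?thesis .
qed

lemma commutator:
  assumes "\<And>i. i \<ge> 1 \<Longrightarrow> fls_nth D (int i) = der g (fls_nth h (int i)) - der h (fls_nth g (int i))"
  shows "der g (der h p) - der h (der g p) = der D p"
proof -
  let ?S = "Suc ` Rvars p"
  have S: "finite ?S" "0 \<notin> ?S" by auto
  have dp: "der f p = (\<Sum>i\<in>?S. fls_nth f (int i) * pdiff i p)" for f
    by (rule der_superset) auto
  have dpp: "der f (pdiff j p) = (\<Sum>i\<in>?S. fls_nth f (int i) * pdiff i (pdiff j p))" for f j
    by (rule der_superset) (use Rvars_pdiff[of j p] in auto)
  have X: "der g (der h p) = (\<Sum>j\<in>?S. der g (fls_nth h (int j)) * pdiff j p)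
     + (\<Sum>j\<in>?S. \<Sum>i\<in>?S. fls_nth h (int j) * fls_nth g (int i) * pdiff i (pdiff j p))"
    by (simp add: dp[of h] der_sum der_mult dpp sum.distrib sum_distrib_left mult.assoc)
  have Y: "der h (der g p) = (\<Sum>j\<in>?S. der h (fls_nth g (int j)) * pdiff j p)
     + (\<Sum>j\<in>?S. \<Sum>i\<in>?S. fls_nth g (int j) * fls_nth h (int i) * pdiff i (pdiff j p))"
    by (simp add: dp[of g] der_sum der_mult dpp sum.distrib sum_distrib_left mult.assoc)
  have Z: "(\<Sum>j\<in>?S. \<Sum>i\<in>?S. fls_nth h (int j) * fls_nth g (int i) * pdiff i (pdiff j p))
      = (\<Sum>j\<in>?S. \<Sum>i\<in>?S. fls_nth g (int j) * fls_nth h (int i) * pdiff i (pdiff j p))"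
    by (subst sum.swap) (simp add: pdiff_comm mult.commute)
  have "der g (der h p) - der h (der g p)
      = (\<Sum>j\<in>?S. (der g (fls_nth h (int j)) - der h (fls_nth g (int j))) * pdiff j p)"
    unfolding X Y Z by (simp add: sum_subtractf algebra_simps)
  also have "\<dots> = (\<Sum>j\<in>?S. fls_nth D (int j) * pdiff j p)"
  proof (rule sum.cong[OF refl])
    fix j assume "j \<in> ?S"
    hence "j \<ge> 1" by auto
    thus "(der g (fls_nth h (int j)) - der h (fls_nth g (int j))) * pdiff j p = fls_nth D (int j) * pdiff j p"
      by (simp only: assms)
  qed
  also have "\<dots> = der D p" by (simp add: dp)
  finally show ?thesis .
qed



definition dser :: "R fls \<Rightarrow> R fls \<Rightarrow> R fls" where
  "dser f s = Abs_fls (\<lambda>n. der f (fls_nth s n))"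

lemma dser_nth[simp]: "fls_nth (dser f s) n = der f (fls_nth s n)"
  unfolding dser_def
  by (rule nth_Abs_fls, rule eventually_mono[OF MOST_fls_neg_nth_eq_0[of s]]) simp

lemma dser_add: "dser f (s + t) = dser f s + dser f t"
  by (rule fls_eqI) (simp add: der_add)

lemma dser_diff: "dser f (s - t) = dser f s - dser f t"
  by (rule fls_eqI) (simp add: der_diff)

lemma dser_zero[simp]: "dser f 0 = 0"
  by (rule fls_eqI) simp

lemma dser_sum: "dser f (sum F A) = (\<Sum>x\<in>A. dser f (F x))"
  by (induction A rule: infinite_finite_induct) (auto simp: dser_add)

lemma fls_times_nth_bound:
  fixes f g :: "'a::comm_ring_1 fls"
  assumes "\<And>i. i < a \<Longrightarrow> f $$ i = 0" "\<And>i. i < b \<Longrightarrow> g $$ i = 0"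
  shows "(f * g) $$ n = (\<Sum>i=a..n-b. f $$ i * g $$ (n - i))"
proof (cases "f = 0 \<or> g = 0")
  case True thus ?thesis by auto
next
  case False
  hence a: "a \<le> fls_subdegree f" and b: "b \<le> fls_subdegree g"
    using assms by (auto intro: fls_subdegree_geI)
  have "(f * g) $$ n = (\<Sum>i=fls_subdegree f..n - fls_subdegree g. f $$ i * g $$ (n - i))"
    by (rule fls_times_nth(2))
  also have "\<dots> = (\<Sum>i=a..n-b. f $$ i * g $$ (n - i))"
  proof (rule sum.mono_neutral_left)
    show "\<forall>i\<in>{a..n - b} - {fls_subdegree f..n - fls_subdegree g}. f $$ i * g $$ (n - i) = 0"
    proof
      fix i assume "i \<in> {a..n - b} - {fls_subdegree f..n - fls_subdegree g}"
      hence "i < fls_subdegree f \<or> n - i < fls_subdegree g" by auto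
      thus "f $$ i * g $$ (n - i) = 0" by auto
    qed
  qed (use a b in auto)
  finally show ?thesis .
qed

lemma dser_vanish: "i < fls_subdegree s \<Longrightarrow> dser f s $$ i = 0"
  by simp

lemma dser_mult: "dser f (s * t) = dser f s * t + s * dser f t"
proof (rule fls_eqI)
  fix n
  let ?a = "fls_subdegree s" and ?b = "fls_subdegree t"
  have "dser f (s * t) $$ n = der f (\<Sum>i=?a..n-?b. s $$ i * t $$ (n - i))"
    by (simp add: fls_times_nth_bound[of ?a s ?b t])
  also have "\<dots> = (\<Sum>i=?a..n-?b. der f (s $$ i) * t $$ (n - i)) + (\<Sum>i=?a..n-?b. s $$ i * der f (t $$ (n - i)))"
    by (simp add: der_sum der_mult sum.distrib)
  also have "\<dots> = (dser f s * t) $$ n + (s * dser f t) $$ n"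
    by (simp add: fls_times_nth_bound[of ?a "dser f s" ?b t] fls_times_nth_bound[of ?a s ?b "dser f t"])
  finally show "dser f (s * t) $$ n = (dser f s * t + s * dser f t) $$ n" by simp
qed

lemma dser_power: "dser f (a ^ i) = of_nat i * a ^ (i - 1) * dser f a"
proof (induction i)
  case 0
  have "dser f 1 = 0" by (rule fls_eqI) (simp add: der_empty)
  thus ?case by simp
next
  case (Suc i)
  show ?case
  proof (cases i)
    case 0 thus ?thesis by (simp add: dser_mult Suc.IH)
  next
    case (Suc k)
    have IH: "dser f (a ^ Suc k) = of_nat (Suc k) * a ^ k * dser f a"
      using Suc.IH Suc by simp
    have "dser f (a ^ Suc (Suc k)) = dser f a * a ^ Suc k + a * dser f (a ^ Suc k)"
      by (simp only: power_Suc[of a "Suc k"] dser_mult)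
    also have "\<dots> = of_nat (Suc (Suc k)) * a ^ Suc k * dser f a"
      unfolding IH by (simp add: algebra_simps)
    finally show ?thesis using Suc by simp
  qed
qed

lemma dser_const: "dser f (fls_const (Rconst c)) = 0"
  by (rule fls_eqI) (simp add: der_empty)

lemma dser_X: "dser f (fls_X_intpow k) = 0"
  by (rule fls_eqI) (simp add: der_empty)

lemma dser_deriv: "dser f (fls_deriv s) = fls_deriv (dser f s)"
  by (rule fls_eqI) (simp only: fls_deriv_nth dser_nth der_of_int_mult)

lemma phi_nth: "phi $$ n = (if n = -1 then 1 else if n \<ge> 1 then Rvar (nat n) else 0)"
  unfolding phi_def by (rule nth_Abs_fls_lower_bound[where N="-1"]) auto

lemma dser_phi:
  assumes "\<forall>n::int. n \<le> 0 \<longrightarrow> fls_nth f n = 0"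
  shows "dser f phi = f"
proof (rule fls_eqI)
  fix n :: int
  show "dser f phi $$ n = f $$ n"
  proof (cases "n \<ge> 1")
    case True
    thus ?thesis by (simp add: phi_nth der_Rvar)
  next
    case False
    thus ?thesis using assms by (simp add: phi_nth der_empty)
  qed
qed

lemma dser_phi':
  assumes "\<forall>n::int. n \<le> 0 \<longrightarrow> fls_nth f n = 0"
  shows "dser f phi' = fls_deriv f"
  unfolding phi'_def dser_deriv dser_phi[OF assms] ..

lemma dser_term:
  "dser f (fls_const (Rconst C) * fls_X_intpow k * a ^ i * b ^ j)
   = (of_nat i * fls_const (Rconst C) * fls_X_intpow k * a ^ (i - 1) * b ^ j) * dser f a
   + (of_nat j * fls_const (Rconst C) * fls_X_intpow k * a ^ i * b ^ (j - 1)) * dser f b"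
proof -
  have c0: "dser f (fls_const (Rconst C) * fls_X_intpow k) = 0"
    by (rule fls_eqI) (simp add: der_empty)
  show ?thesis
    by (simp add: dser_mult c0 dser_power dser_const dser_X algebra_simps)
qed

lemma dser_evalP:
  "dser f (evalP N M c a b) = evalP_a N M c a b * dser f a + evalP_b N M c a b * dser f b"
  unfolding evalP_def evalP_a_def evalP_b_def
  by (simp add: dser_sum dser_term sum.distrib sum_distrib_right)


theorem mainTheorem16:
  fixes NG MG NH MH :: nat and cG cH :: "nat \<Rightarrow> nat \<Rightarrow> int \<Rightarrow> real"
  defines "g \<equiv> evalP NG MG cG phi phi'"
      and "h \<equiv> evalP NH MH cH phi phi'"
  assumes "\<forall>n::int. n \<le> 0 \<longrightarrow> fls_nth g n = 0"
      and "\<forall>n::int. n \<le> 0 \<longrightarrow> fls_nth h n = 0"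
  shows "\<forall>p. der g (der h p) - der h (der g p)
            = der (evalP_a NH MH cH phi phi' * g - evalP_a NG MG cG phi phi' * h
                   + evalP_b NH MH cH phi phi' * fls_deriv g
                   - evalP_b NG MG cG phi phi' * fls_deriv h) p"
proof
  fix p
  let ?D = "evalP_a NH MH cH phi phi' * g - evalP_a NG MG cG phi phi' * h
                   + evalP_b NH MH cH phi phi' * fls_deriv g
                   - evalP_b NG MG cG phi phi' * fls_deriv h"
  have gh: "dser g h = evalP_a NH MH cH phi phi' * g + evalP_b NH MH cH phi phi' * fls_deriv g"
    unfolding h_def by (simp only: dser_evalP dser_phi[OF assms(3)] dser_phi'[OF assms(3)])
  have hg: "dser h g = evalP_a NG MG cG phi phi' * h + evalP_b NG MG cG phi phi' * fls_deriv h"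
    unfolding g_def by (simp only: dser_evalP dser_phi[OF assms(4)] dser_phi'[OF assms(4)])
  have D: "?D = dser g h - dser h g"
    unfolding gh hg by (simp add: algebra_simps)
  show "der g (der h p) - der h (der g p) = der ?D p"
    by (rule commutator) (simp add: D)
qed

end
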